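(* Let $G=(V\cup\{s,t\},E)$ be a directed or undirected graph with distinguished vertices $s,t$, such that the path coalitional games defined below are simple games. Then the core of (i) the Edge Path Coalitional Game (EPCG) of $G$ is non-empty if and only if there exists an edge whose removal disconnects $s$ and $t$; (ii) the Vertex Path Coalitional Game (VPCG) of $G$ is non-empty if and only if there exists a vertex whose removal disconnects $s$ and $t$; (iii) the dual $EPCG^D$ of the EPCG of $G$ is non-empty if and only if there exists an $(s,t)$ edge; (iv) the dual $VPCG^D$ of the VPCG of $G$ is non-empty if and only if there exists a vertex $x$ such that $(s,x)$ and $(x,t)$ are edges of $G$.
   Context: A coalitional game is a pair $(N,v)$ with $N$ a finite player set and $v:2^N\to\mathbb{R}_+$, $v(\varnothing)=0$. A simple game is a monotone coalitional game with $v:2^N\to\{0,1\}$, $v(\varnothing)=0$, $v(N)=1$. The EPCG of $G$ has $N=E$ and $v(S)=1$ iff the edges in $S$ contain an $s$-$t$ path, else $0$. The VPCG of $G$ has $N=V$ (the vertices other than $s,t$) and $v(S)=1$ iff the graph induced on $S\cup\{s,t\}$ contains an $s$-$t$ path, else $0$. The dual of $(N,v)$ is $(N,v^D)$ with $v^D(S)=v(N)-v(N\setminus S)$. For a payoff vector $x\in\mathbb{R}^N$ write $x(S)=\sum_{i\in S}x_i$ and $e(x,S)=x(S)-v(S)$. The core is the set of payoff vectors $x$ with $x(N)=v(N)$ and $e(x,S)\ge 0$ for all $S\subseteq N$. *)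

theory Defs
  imports Complex_Main "HOL-Library.FuncSet"
begin

definition coalitional_game :: "'p set \<Rightarrow> ('p set \<Rightarrow> real) \<Rightarrow> bool" where
  "coalitional_game N v \<longleftrightarrow> finite N \<and> v {} = 0 \<and> (\<forall>S\<subseteq>N. v S \<ge> 0)"

definition simple_game :: "'p set \<Rightarrow> ('p set \<Rightarrow> real) \<Rightarrow> bool" where
  "simple_game N v \<longleftrightarrow> coalitional_game N v \<and> (\<forall>S\<subseteq>N. v S = 0 \<or> v S = 1)
     \<and> (\<forall>S T. S \<subseteq> T \<and> T \<subseteq> N \<longrightarrow> v S \<le> v T) \<and> v {} = 0 \<and> v N = 1"

definition dual_game :: "'p set \<Rightarrow> ('p set \<Rightarrow> real) \<Rightarrow> 'p set \<Rightarrow> real" where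
  "dual_game N v S = v N - v (N - S)"

definition excess :: "('p \<Rightarrow> real) \<Rightarrow> ('p set \<Rightarrow> real) \<Rightarrow> 'p set \<Rightarrow> real" where
  "excess x v S = sum x S - v S"

text \<open>Payoff vectors in R^N are represented as functions on N (extensional, 0 outside N).\<close>
definition core :: "'p set \<Rightarrow> ('p set \<Rightarrow> real) \<Rightarrow> ('p \<Rightarrow> real) set" where
  "core N v = {x \<in> extensional N. sum x N = v N \<and> (\<forall>S\<subseteq>N. excess x v S \<ge> 0)}"

text \<open>A (multi)graph: edges of type 'e with endpoints \<open>ends e = (u,w)\<close>.
  If \<open>directed\<close> is False, edges can be traversed in both directions.\<close>

definition step :: "bool \<Rightarrow> ('e \<Rightarrow> 'v \<times> 'v) \<Rightarrow> 'e set \<Rightarrow> ('v \<times> 'v) set" where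
  "step directed ends S = {(u, w). \<exists>e\<in>S. ends e = (u, w) \<or> (\<not> directed \<and> ends e = (w, u))}"

definition connects :: "bool \<Rightarrow> ('e \<Rightarrow> 'v \<times> 'v) \<Rightarrow> 'e set \<Rightarrow> 'v \<Rightarrow> 'v \<Rightarrow> bool" where
  "connects directed ends S s t \<longleftrightarrow> (s, t) \<in> (step directed ends S)\<^sup>*"

definition induced_edges :: "('e \<Rightarrow> 'v \<times> 'v) \<Rightarrow> 'e set \<Rightarrow> 'v set \<Rightarrow> 'e set" where
  "induced_edges ends E W = {e \<in> E. fst (ends e) \<in> W \<and> snd (ends e) \<in> W}"

definition EPCG :: "bool \<Rightarrow> ('e \<Rightarrow> 'v \<times> 'v) \<Rightarrow> 'v \<Rightarrow> 'v \<Rightarrow> 'e set \<Rightarrow> real" where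
  "EPCG directed ends s t S = (if connects directed ends S s t then 1 else 0)"

definition VPCG :: "bool \<Rightarrow> ('e \<Rightarrow> 'v \<times> 'v) \<Rightarrow> 'e set \<Rightarrow> 'v \<Rightarrow> 'v \<Rightarrow> 'v set \<Rightarrow> real" where
  "VPCG directed ends E s t S =
     (if connects directed ends (induced_edges ends E (S \<union> {s, t})) s t then 1 else 0)"

definition graph :: "'v set \<Rightarrow> 'e set \<Rightarrow> ('e \<Rightarrow> 'v \<times> 'v) \<Rightarrow> 'v \<Rightarrow> 'v \<Rightarrow> bool" where
  "graph V E ends s t \<longleftrightarrow> finite V \<and> finite E \<and> s \<noteq> t \<and> s \<notin> V \<and> t \<notin> V
     \<and> (\<forall>e\<in>E. fst (ends e) \<in> V \<union> {s, t} \<and> snd (ends e) \<in> V \<union> {s, t})"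

end

theory Submission
  imports Defs
begin

lemma veto_core:
  assumes fin: "finite N" and vals: "\<forall>S\<subseteq>N. v S = 0 \<or> v S = 1"
    and mono: "\<forall>S T. S\<subseteq>T \<and> T\<subseteq>N \<longrightarrow> v S \<le> v T" and vN: "v N = 1"
  shows "core N v \<noteq> {} \<longleftrightarrow> (\<exists>i\<in>N. v (N-{i}) = 0)"
proof
  assume "core N v \<noteq> {}"
  then obtain x where x: "x \<in> core N v" by blast
  have sN: "sum x N = 1" and ex: "\<And>S. S \<subseteq> N \<Longrightarrow> sum x S \<ge> v S"
    using x vN unfolding core_def excess_def by auto
  show "\<exists>i\<in>N. v (N-{i}) = 0"
  proof (rule ccontr)
    assume "\<not> ?thesis"
    then have nz: "\<And>i. i \<in> N \<Longrightarrow> v (N-{i}) \<noteq> 0" by blast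
    have v1: "v (N-{i}) = 1" if i: "i \<in> N" for i
      using vals[rule_format, of "N-{i}"] nz[OF i] by auto
    have "\<And>i. i \<in> N \<Longrightarrow> x i = 0"
    proof -
      fix i assume i: "i \<in> N"
      have a: "sum x N = x i + sum x (N-{i})" using sum.remove[OF fin i] .
      have b: "sum x (N-{i}) \<ge> 1" using ex[of "N-{i}"] v1[OF i] by auto
      have c: "x i \<ge> v {i}" using ex[of "{i}"] i by auto
      have d: "v {i} \<ge> 0" using vals[rule_format, of "{i}"] i by auto
      show "x i = 0" using a b c d sN by linarith
    qed
    then have "sum x N = 0" by simp
    with sN show False by simp
  qed
next
  assume "\<exists>i\<in>N. v (N-{i}) = 0"
  then obtain i where i: "i \<in> N" and vi: "v (N-{i}) = 0" by blast
  define y where "y = (\<lambda>j. if j = i then (1::real) else 0)"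
  define x where "x = restrict y N"
  have sx: "sum x S = (if i \<in> S then 1 else 0)" if SN: "S \<subseteq> N" for S
  proof -
    have "finite S" using finite_subset[OF SN fin] .
    moreover have "sum x S = sum y S" using SN unfolding x_def by (intro sum.cong) auto
    ultimately show ?thesis unfolding y_def by (simp add: sum.delta')
  qed
  have "x \<in> core N v"
    unfolding core_def excess_def
  proof (intro CollectI conjI allI impI)
    show "x \<in> extensional N" unfolding x_def by simp
    show "sum x N = v N" using sx[of N] i vN by simp
    fix S assume S: "S \<subseteq> N"
    show "0 \<le> sum x S - v S"
    proof (cases "i \<in> S")
      case True
      have "v S \<le> 1" using vals[rule_format, OF S] by auto
      then show ?thesis using sx[OF S] True by simp
    next
      case False
      then have "S \<subseteq> N - {i}" using S by auto
      moreover have "N - {i} \<subseteq> N" by auto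
      ultimately have "v S \<le> v (N - {i})" using mono by blast
      then have "v S \<le> 0" using vi by simp
      then show ?thesis using sx[OF S] False by simp
    qed
  qed
  then show "core N v \<noteq> {}" by blast
qed

lemma dual_props:
  assumes vals: "\<forall>S\<subseteq>N. v S = 0 \<or> v S = 1"
    and mono: "\<forall>S T. S\<subseteq>T \<and> T\<subseteq>N \<longrightarrow> v S \<le> v T" and vN: "v N = 1" and v0: "v {} = 0"
  shows "\<forall>S\<subseteq>N. dual_game N v S = 0 \<or> dual_game N v S = 1"
    "\<forall>S T. S\<subseteq>T \<and> T\<subseteq>N \<longrightarrow> dual_game N v S \<le> dual_game N v T"
    "dual_game N v N = 1"
    "\<And>i. i \<in> N \<Longrightarrow> dual_game N v (N - {i}) = 1 - v {i}"
proof -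
  show "\<forall>S\<subseteq>N. dual_game N v S = 0 \<or> dual_game N v S = 1"
  proof (intro allI impI)
    fix S assume "S \<subseteq> N"
    have "v (N - S) = 0 \<or> v (N - S) = 1" using vals by blast
    then show "dual_game N v S = 0 \<or> dual_game N v S = 1" unfolding dual_game_def using vN by auto
  qed
  show "\<forall>S T. S\<subseteq>T \<and> T\<subseteq>N \<longrightarrow> dual_game N v S \<le> dual_game N v T"
  proof (intro allI impI)
    fix S T assume h: "S \<subseteq> T \<and> T \<subseteq> N"
    have "N - T \<subseteq> N - S" "N - S \<subseteq> N" using h by auto
    then have "v (N - T) \<le> v (N - S)" using mono by blast
    then show "dual_game N v S \<le> dual_game N v T" unfolding dual_game_def by simp
  qed
  show "dual_game N v N = 1" unfolding dual_game_def using vN v0 by simp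
  fix i assume "i \<in> N"
  then have "N - (N - {i}) = {i}" by auto
  then show "dual_game N v (N - {i}) = 1 - v {i}" unfolding dual_game_def using vN by simp
qed

lemma rt_stuck:
  assumes "(a, b) \<in> R\<^sup>*" and "\<And>z. (a, z) \<in> R \<Longrightarrow> z = a"
  shows "b = a"
  using assms by (induction rule: rtrancl_induct) auto

lemma rt_stuck2:
  assumes "(a, b) \<in> R\<^sup>*" and "\<And>z. (z, b) \<in> R \<Longrightarrow> z = b"
  shows "b = a"
  using assms by (induction rule: converse_rtrancl_induct) auto


lemma single_edge:
  assumes "s \<noteq> t"
  shows "(s, t) \<in> (step d ends {e})\<^sup>* \<longleftrightarrow> (ends e = (s, t) \<or> (\<not> d \<and> ends e = (t, s)))"
proof
  assume h: "(s, t) \<in> (step d ends {e})\<^sup>*"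
  have tr: "(s, t) \<in> (step d ends {e})\<^sup>+" using h assms by (simp add: rtrancl_eq_or_trancl)
  obtain y where y: "(s, y) \<in> step d ends {e}"
    using tranclD[OF tr] by blast
  obtain z where z: "(z, t) \<in> step d ends {e}"
    using tranclD2[OF tr] by blast
  show "ends e = (s, t) \<or> (\<not> d \<and> ends e = (t, s))"
    using y z assms unfolding step_def by auto
next
  assume "ends e = (s, t) \<or> (\<not> d \<and> ends e = (t, s))"
  then have "(s, t) \<in> step d ends {e}" unfolding step_def by auto
  then show "(s, t) \<in> (step d ends {e})\<^sup>*" by blast
qed

lemma step_mono: "A \<subseteq> B \<Longrightarrow> step d ends A \<subseteq> step d ends B"
  unfolding step_def by auto

lemma simple_parts:
  assumes "simple_game N v"
  shows "finite N" "\<forall>S\<subseteq>N. v S = 0 \<or> v S = 1"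
    "\<forall>S T. S\<subseteq>T \<and> T\<subseteq>N \<longrightarrow> v S \<le> v T" "v N = 1" "v {} = 0"
  using assms unfolding simple_game_def coalitional_game_def by auto

theorem proposition1:
  fixes V :: "'v set" and E :: "'e set" and ends :: "'e \<Rightarrow> 'v \<times> 'v"
    and s t :: 'v and directed :: bool
  assumes G: "graph V E ends s t"
  shows
    "(simple_game E (EPCG directed ends s t) \<longrightarrow>
       (core E (EPCG directed ends s t) \<noteq> {} \<longleftrightarrow>
        (\<exists>e\<in>E. \<not> connects directed ends (E - {e}) s t)))
     \<and> (simple_game V (VPCG directed ends E s t) \<longrightarrow>
       (core V (VPCG directed ends E s t) \<noteq> {} \<longleftrightarrow>
        (\<exists>x\<in>V. \<not> connects directed ends (induced_edges ends E ((V - {x}) \<union> {s, t})) s t)))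
     \<and> (simple_game E (EPCG directed ends s t) \<longrightarrow>
       (core E (dual_game E (EPCG directed ends s t)) \<noteq> {} \<longleftrightarrow>
        (\<exists>e\<in>E. ends e = (s, t) \<or> (\<not> directed \<and> ends e = (t, s)))))
     \<and> (simple_game V (VPCG directed ends E s t) \<longrightarrow>
       (core V (dual_game V (VPCG directed ends E s t)) \<noteq> {} \<longleftrightarrow>
        (\<exists>x\<in>V. (s, x) \<in> step directed ends E \<and> (x, t) \<in> step directed ends E)))"
proof (intro conjI impI)
  have st: "s \<noteq> t" and sV: "s \<notin> V" and tV: "t \<notin> V"
    and endsE: "\<forall>e\<in>E. fst (ends e) \<in> V \<union> {s, t} \<and> snd (ends e) \<in> V \<union> {s, t}"
    using G unfolding graph_def by auto
  let ?v = "EPCG directed ends s t"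
  let ?w = "VPCG directed ends E s t"
  {
    assume sg: "simple_game E ?v"
    note P = simple_parts[OF sg]
    have "core E ?v \<noteq> {} \<longleftrightarrow> (\<exists>e\<in>E. ?v (E - {e}) = 0)"
      using veto_core[OF P(1-4)] .
    then show "core E ?v \<noteq> {} \<longleftrightarrow> (\<exists>e\<in>E. \<not> connects directed ends (E - {e}) s t)"
      unfolding EPCG_def by simp
  }
  {
    assume sg: "simple_game V ?w"
    note P = simple_parts[OF sg]
    have "core V ?w \<noteq> {} \<longleftrightarrow> (\<exists>x\<in>V. ?w (V - {x}) = 0)"
      using veto_core[OF P(1-4)] .
    then show "core V ?w \<noteq> {} \<longleftrightarrow> (\<exists>x\<in>V. \<not> connects directed ends (induced_edges ends E ((V - {x}) \<union> {s, t})) s t)"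
      unfolding VPCG_def by simp
  }
  {
    assume sg: "simple_game E ?v"
    note P = simple_parts[OF sg]
    note D = dual_props[OF P(2-5)]
    have "core E (dual_game E ?v) \<noteq> {} \<longleftrightarrow> (\<exists>e\<in>E. dual_game E ?v (E - {e}) = 0)"
      using veto_core[OF P(1) D(1-3)] .
    also have "\<dots> \<longleftrightarrow> (\<exists>e\<in>E. ?v {e} = 1)" using D(4) by auto
    also have "\<dots> \<longleftrightarrow> (\<exists>e\<in>E. ends e = (s, t) \<or> (\<not> directed \<and> ends e = (t, s)))"
      unfolding EPCG_def connects_def by (simp add: single_edge[OF st])
    finally show "core E (dual_game E ?v) \<noteq> {} \<longleftrightarrow> (\<exists>e\<in>E. ends e = (s, t) \<or> (\<not> directed \<and> ends e = (t, s)))" .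
  }
  {
    assume sg: "simple_game V ?w"
    note P = simple_parts[OF sg]
    note D = dual_props[OF P(2-5)]
    have "core V (dual_game V ?w) \<noteq> {} \<longleftrightarrow> (\<exists>x\<in>V. dual_game V ?w (V - {x}) = 0)"
      using veto_core[OF P(1) D(1-3)] .
    also have "\<dots> \<longleftrightarrow> (\<exists>x\<in>V. ?w {x} = 1)" using D(4) by auto
    also have "\<dots> \<longleftrightarrow> (\<exists>x\<in>V. (s, x) \<in> step directed ends E \<and> (x, t) \<in> step directed ends E)"
    proof (intro bex_cong refl)
      fix x assume xV: "x \<in> V"
      have xs: "x \<noteq> s" "x \<noteq> t" using xV sV tV by auto
      let ?I = "induced_edges ends E ({x} \<union> {s, t})"
      let ?R = "step directed ends ?I"
      have Rsub: "?R \<subseteq> step directed ends E"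
        by (rule step_mono) (auto simp: induced_edges_def)
      have Rin: "a \<in> {x, s, t} \<and> b \<in> {x, s, t}" if ab: "(a, b) \<in> ?R" for a b
      proof -
        obtain e where e: "e \<in> ?I" "ends e = (a, b) \<or> ends e = (b, a)"
          using ab unfolding step_def by auto
        then show ?thesis unfolding induced_edges_def by auto
      qed
      have noST: "(s, t) \<notin> ?R"
      proof
        assume "(s, t) \<in> ?R"
        then obtain e where e: "e \<in> E" "ends e = (s, t) \<or> (\<not> directed \<and> ends e = (t, s))"
          and ex: "fst (ends e) \<in> {x, s, t}" "snd (ends e) \<in> {x, s, t}"
          unfolding step_def induced_edges_def by auto
        have "e \<in> induced_edges ends E ({} \<union> {s, t})"
          using e unfolding induced_edges_def by auto
        then have "(s, t) \<in> step directed ends (induced_edges ends E ({} \<union> {s, t}))"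
          using e unfolding step_def by blast
        then have "?w {} = 1" unfolding VPCG_def connects_def by auto
        with P(5) show False by simp
      qed
      show "?w {x} = 1 \<longleftrightarrow> (s, x) \<in> step directed ends E \<and> (x, t) \<in> step directed ends E"
      proof
        assume "?w {x} = 1"
        then have c: "(s, t) \<in> ?R\<^sup>*" unfolding VPCG_def connects_def by (auto split: if_splits)
        have "(s, x) \<in> ?R"
        proof (rule ccontr)
          assume nx: "(s, x) \<notin> ?R"
          have "\<And>z. (s, z) \<in> ?R \<Longrightarrow> z = s" using Rin nx noST by blast
          then have "t = s" using rt_stuck[OF c] by blast
          with st show False by simp
        qed
        moreover have "(x, t) \<in> ?R"
        proof (rule ccontr)
          assume nx: "(x, t) \<notin> ?R"
          have "\<And>z. (z, t) \<in> ?R \<Longrightarrow> z = t" using Rin nx noST by blast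
          then have "t = s" using rt_stuck2[OF c] by blast
          with st show False by simp
        qed
        ultimately show "(s, x) \<in> step directed ends E \<and> (x, t) \<in> step directed ends E"
          using Rsub by blast
      next
        assume h: "(s, x) \<in> step directed ends E \<and> (x, t) \<in> step directed ends E"
        have "(a, b) \<in> ?R" if ab: "(a, b) \<in> step directed ends E" "a \<in> {x, s, t}" "b \<in> {x, s, t}" for a b
        proof -
          obtain e where e: "e \<in> E" "ends e = (a, b) \<or> (\<not> directed \<and> ends e = (b, a))"
            using ab(1) unfolding step_def by auto
          then have "e \<in> ?I" using ab(2,3) unfolding induced_edges_def by auto
          then show ?thesis using e(2) unfolding step_def by blast
        qed
        then have "(s, x) \<in> ?R" "(x, t) \<in> ?R" using h by auto
        then have "(s, t) \<in> ?R\<^sup>*" by auto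
        then show "?w {x} = 1" unfolding VPCG_def connects_def by simp
      qed
    qed
    finally show "core V (dual_game V ?w) \<noteq> {} \<longleftrightarrow> (\<exists>x\<in>V. (s, x) \<in> step directed ends E \<and> (x, t) \<in> step directed ends E)" .
  }
qed

end
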